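(* Let $q$ be a prime power, $b$ a positive integer, and $M,D$ positive integers with $M>q^{b-1}$ and $D\ge b$. Then $N_b(M,D)\le N_H(M,D-b+1)$.
   Context: For $\boldsymbol{z}=(z_0,\ldots,z_{n-1}),\boldsymbol{w}\in\mathbb{F}_q^n$, $d_b(\boldsymbol{z},\boldsymbol{w})$ is the number of $i\in\{0,\ldots,n-1\}$ with $(z_i,\ldots,z_{i+b-1})\ne(w_i,\ldots,w_{i+b-1})$ (indices mod $n$). $N_b(M,D)$ is the smallest $r$ such that there exist $\boldsymbol{p}_1,\ldots,\boldsymbol{p}_M\in\mathbb{F}_q^r$ with $d_b(\boldsymbol{p}_i,\boldsymbol{p}_j)\ge D$ for all $i\ne j$; $N_H(M,D)$ is defined the same way with the Hamming distance $d_H$ in place of $d_b$. *)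

theory Defs
  imports Main
begin

text \<open>Vectors of F_q^n are lists of length n over a finite field type 'a (so q = CARD('a)).\<close>

definition dist_b :: "nat \<Rightarrow> 'a list \<Rightarrow> 'a list \<Rightarrow> nat" where
  "dist_b b z w = (let n = length z in
     card {i. i < n \<and> (\<exists>j<b. z ! ((i + j) mod n) \<noteq> w ! ((i + j) mod n))})"

definition dist_H :: "'a list \<Rightarrow> 'a list \<Rightarrow> nat" where
  "dist_H z w = card {i. i < length z \<and> z ! i \<noteq> w ! i}"

definition N_b :: "'a itself \<Rightarrow> nat \<Rightarrow> nat \<Rightarrow> nat \<Rightarrow> nat" where
  "N_b (_ :: 'a itself) b M D = (LEAST r. \<exists>p :: nat \<Rightarrow> 'a list.
      (\<forall>i\<in>{1..M}. length (p i) = r) \<and>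
      (\<forall>i\<in>{1..M}. \<forall>j\<in>{1..M}. i \<noteq> j \<longrightarrow> dist_b b (p i) (p j) \<ge> D))"

definition N_H :: "'a itself \<Rightarrow> nat \<Rightarrow> nat \<Rightarrow> nat" where
  "N_H (_ :: 'a itself) M D = (LEAST r. \<exists>p :: nat \<Rightarrow> 'a list.
      (\<forall>i\<in>{1..M}. length (p i) = r) \<and>
      (\<forall>i\<in>{1..M}. \<forall>j\<in>{1..M}. i \<noteq> j \<longrightarrow> dist_H (p i) (p j) \<ge> D))"

end

theory Submission
  imports Defs
begin

definition Tset :: "nat \<Rightarrow> nat set \<Rightarrow> nat \<Rightarrow> nat set" where
  "Tset n S b = {i. i < n \<and> (\<exists>j<b. (i + j) mod n \<in> S)}"

lemma shift_grow:
  fixes A :: "nat set"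
  assumes A: "A \<subseteq> {..<n}" "A \<noteq> {}" "A \<noteq> {..<n}"
  shows "card (A \<union> {i. i < n \<and> Suc i mod n \<in> A}) \<ge> card A + 1"
proof -
  define P where "P = {i. i < n \<and> Suc i mod n \<in> A}"
  have n0: "n > 0" using A by auto
  have finA: "finite A" using A(1) finite_subset by blast
  have finP: "finite P" unfolding P_def by auto
  define g where "g a = (a + n - 1) mod n" for a
  have sg: "Suc (g a) mod n = a" if "a \<in> A" for a
  proof -
    have "a < n" using that A(1) by auto
    have "Suc (g a) mod n = Suc ((a + n - 1) mod n) mod n" by (simp add: g_def)
    also have "\<dots> = (Suc (a + n - 1)) mod n" by (simp add: mod_Suc_eq)
    also have "Suc (a + n - 1) = a + n" using n0 by simp
    also have "(a + n) mod n = a" using \<open>a < n\<close> by simp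
    finally show ?thesis .
  qed
  have "inj_on g A" by (metis inj_onI sg)
  moreover have "g ` A \<subseteq> P" unfolding P_def using sg n0 by (auto simp: g_def)
  ultimately have cAP: "card A \<le> card P" by (metis card_inj_on_le finP)
  show ?thesis
  proof (cases "P \<subseteq> A")
    case False
    then have "A \<subset> A \<union> P" by blast
    then have "card A < card (A \<union> P)" using finA finP by (simp add: psubset_card_mono)
    then show ?thesis unfolding P_def by simp
  next
    case True
    then have PA: "P = A" using card_subset_eq[OF finA True] cAP card_mono[OF finA True] by simp
    have pred: "a - 1 \<in> A" if "a \<in> A" "a > 0" for a
    proof -
      have "a < n" using that A(1) by auto
      then have "a - 1 \<in> P" unfolding P_def using that by simp
      then show ?thesis using PA by simp
    qed
    have down: "\<forall>m\<le>a. m \<in> A" if "a \<in> A" for a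
      using that
    proof (induction a)
      case 0 then show ?case by simp
    next
      case (Suc a)
      then have "a \<in> A" using pred[of "Suc a"] by simp
      then show ?case using Suc by (metis le_Suc_eq)
    qed
    obtain a where "a \<in> A" using A(2) by blast
    then have "0 \<in> A" using down by blast
    then have "n - 1 \<in> P" unfolding P_def using n0 by simp
    then have "n - 1 \<in> A" using PA by simp
    then have "{..<n} \<subseteq> A" using down by fastforce
    then show ?thesis using A by blast
  qed
qed

lemma Tset_sub: "Tset n S b \<subseteq> {..<n}" unfolding Tset_def by auto

lemma Tset_Suc: "Tset n S b \<union> {i. i < n \<and> Suc i mod n \<in> Tset n S b} \<subseteq> Tset n S (Suc b)"
proof
  fix i assume "i \<in> Tset n S b \<union> {i. i < n \<and> Suc i mod n \<in> Tset n S b}"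
  then consider "i \<in> Tset n S b" | "i < n" "Suc i mod n \<in> Tset n S b" by blast
  then show "i \<in> Tset n S (Suc b)"
  proof cases
    case 1 then show ?thesis unfolding Tset_def by (auto simp: less_Suc_eq)
  next
    case 2
    then obtain j where j: "j < b" "(Suc i mod n + j) mod n \<in> S" unfolding Tset_def by auto
    have "(Suc i mod n + j) mod n = (i + Suc j) mod n" by (simp add: mod_add_left_eq)
    then show ?thesis using 2 j unfolding Tset_def by auto
  qed
qed

lemma Tset_card:
  assumes "S \<subseteq> {..<n}" "S \<noteq> {}" "b \<ge> 1"
  shows "card (Tset n S b) \<ge> min n (card S + b - 1)"
  using assms(3)
proof (induction b rule: dec_induct)
  case base
  have "Tset n S 1 = S"
  proof (intro set_eqI iffI)
    fix x assume "x \<in> Tset n S 1"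
    then show "x \<in> S" unfolding Tset_def by (simp add: less_Suc_eq) (metis mod_less)
  next
    fix x assume "x \<in> S"
    moreover have "x < n" using \<open>x \<in> S\<close> assms(1) by blast
    ultimately show "x \<in> Tset n S 1" unfolding Tset_def by simp
  qed
  then show ?case by (simp add: min_def)
next
  case (step b)
  have fin: "finite (Tset n S (Suc b))" by (rule finite_subset[OF Tset_sub]) simp
  have ne: "Tset n S b \<noteq> {}"
  proof -
    obtain s where "s \<in> S" using assms(2) by blast
    then have "s \<in> Tset n S b" using assms(1) step(1) unfolding Tset_def
      by (intro CollectI conjI exI[of _ 0]) auto
    then show ?thesis by blast
  qed
  show ?case
  proof (cases "Tset n S b = {..<n}")
    case True
    then have "Tset n S (Suc b) = {..<n}" using Tset_Suc[of n S b] Tset_sub[of n S "Suc b"] by blast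
    then show ?thesis by simp
  next
    case False
    have "card (Tset n S b) + 1 \<le> card (Tset n S b \<union> {i. i < n \<and> Suc i mod n \<in> Tset n S b})"
      using shift_grow[OF Tset_sub ne False] .
    also have "\<dots> \<le> card (Tset n S (Suc b))" using card_mono[OF fin Tset_Suc] .
    finally show ?thesis using step(3) by linarith
  qed
qed

lemma dist_b_ge:
  assumes "length z = n" "length w = n" "dist_H z w \<ge> 1" "b \<ge> 1"
  shows "dist_b b z w \<ge> min n (dist_H z w + b - 1)"
proof -
  define S where "S = {k. k < n \<and> z ! k \<noteq> w ! k}"
  have dH: "dist_H z w = card S" unfolding dist_H_def S_def using assms by simp
  have Ssub: "S \<subseteq> {..<n}" unfolding S_def by auto
  have Sne: "S \<noteq> {}" using dH assms(3) by auto
  then have n0: "n > 0" using Ssub by auto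
  have "dist_b b z w = card (Tset n S b)"
    unfolding dist_b_def Tset_def S_def Let_def using assms(1) n0
    by (intro arg_cong[where f=card]) auto
  then show ?thesis using Tset_card[OF Ssub Sne assms(4)] dH by simp
qed

lemma NH_exists:
  fixes K M :: nat
  shows "\<exists>p :: nat \<Rightarrow> 'a::field list.
      (\<forall>i\<in>{1..M}. length (p i) = (M+1)*K) \<and>
      (\<forall>i\<in>{1..M}. \<forall>j\<in>{1..M}. i \<noteq> j \<longrightarrow> dist_H (p i) (p j) \<ge> K)"
proof -
  define p :: "nat \<Rightarrow> 'a list" where
    "p i = map (\<lambda>k. if k div K = i then 1 else 0) [0..<(M+1)*K]" for i
  have "dist_H (p i) (p j) \<ge> K" if "i \<in> {1..M}" "j \<in> {1..M}" "i \<noteq> j" for i j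
  proof (cases "K = 0")
    case True then show ?thesis by simp
  next
    case False
    have "i * K + K \<le> (M+1)*K" using that by simp
    have sub: "{i*K..<i*K+K} \<subseteq> {k. k < length (p i) \<and> p i ! k \<noteq> p j ! k}"
    proof
      fix x assume x: "x \<in> {i*K..<i*K+K}"
      have xl: "x < (M+1)*K" using x \<open>i * K + K \<le> (M+1)*K\<close> by (simp del: mult_Suc)
      have "x div K = i" by (rule div_nat_eqI) (use x in \<open>auto simp: mult.commute\<close>)
      then have "p i ! x = 1" "p j ! x = 0" using xl that(3) by (auto simp: p_def)
      then show "x \<in> {k. k < length (p i) \<and> p i ! k \<noteq> p j ! k}"
        using xl by (simp add: p_def)
    qed
    have "finite {k. k < length (p i) \<and> p i ! k \<noteq> p j ! k}" by simp
    from card_mono[OF this sub] show ?thesis unfolding dist_H_def by simp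
  qed
  then show ?thesis by (intro exI[of _ p]) (auto simp: p_def)
qed

theorem lemma4p5:
  fixes b M D :: nat
  assumes "b > 0" and "M > 0" and "D > 0"
    and "M > card (UNIV :: 'a set) ^ (b - 1)"
    and "D \<ge> b"
  shows "N_b TYPE('a::{finite,field}) b M D \<le> N_H TYPE('a) M (D - b + 1)"
proof -
  define D' where "D' = D - b + 1"
  define Q where "Q r = (\<exists>p :: nat \<Rightarrow> 'a list.
      (\<forall>i\<in>{1..M}. length (p i) = r) \<and>
      (\<forall>i\<in>{1..M}. \<forall>j\<in>{1..M}. i \<noteq> j \<longrightarrow> dist_H (p i) (p j) \<ge> D'))" for r
  have NH: "N_H TYPE('a) M D' = (LEAST r. Q r)" unfolding N_H_def Q_def by simp
  have "Q ((M+1)*D')" unfolding Q_def using NH_exists by blast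
  then have "Q (LEAST r. Q r)" by (rule LeastI)
  then obtain p :: "nat \<Rightarrow> 'a list" where
    len: "\<forall>i\<in>{1..M}. length (p i) = N_H TYPE('a) M D'" and
    dH: "\<forall>i\<in>{1..M}. \<forall>j\<in>{1..M}. i \<noteq> j \<longrightarrow> dist_H (p i) (p j) \<ge> D'"
    unfolding Q_def NH by blast
  define r where "r = N_H TYPE('a) M D'"
  have rD: "r \<ge> D"
  proof (rule ccontr)
    assume "\<not> D \<le> r"
    define k where "k = min r (b - 1)"
    define L where "L = {xs :: 'a list. set xs \<subseteq> UNIV \<and> length xs = k}"
    have cL: "card L = card (UNIV :: 'a set) ^ k" unfolding L_def
      by (rule card_lists_length_eq) simp
    have "card (UNIV :: 'a set) ^ k \<le> card (UNIV :: 'a set) ^ (b - 1)"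
      by (rule power_increasing) (auto simp: k_def Suc_le_eq finite_UNIV_card_ge_0)
    then have "card L < card {1..M}" using assms(4) cL by simp
    moreover have "(\<lambda>i. take k (p i)) ` {1..M} \<subseteq> L"
      unfolding L_def using len r_def k_def by auto
    moreover have "finite L" unfolding L_def by (rule finite_lists_length_eq) simp
    ultimately have "\<not> inj_on (\<lambda>i. take k (p i)) {1..M}"
      by (metis card_inj_on_le not_le)
    then obtain i j where ij: "i \<in> {1..M}" "j \<in> {1..M}" "i \<noteq> j"
      "take k (p i) = take k (p j)" unfolding inj_on_def by blast
    have li: "length (p i) = r" "length (p j) = r" using len ij r_def by auto
    have "{m. m < length (p i) \<and> p i ! m \<noteq> p j ! m} \<subseteq> {k..<r}"
    proof
      fix m assume m: "m \<in> {m. m < length (p i) \<and> p i ! m \<noteq> p j ! m}"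
      have "\<not> m < k"
      proof
        assume "m < k"
        then have "take k (p i) ! m = take k (p j) ! m" using ij(4) by simp
        then show False using m \<open>m < k\<close> by simp
      qed
      then show "m \<in> {k..<r}" using m li by simp
    qed
    then have "dist_H (p i) (p j) \<le> r - k" unfolding dist_H_def
      by (metis card_atLeastLessThan card_mono finite_atLeastLessThan)
    moreover have "r - k < D'" using \<open>\<not> D \<le> r\<close> assms unfolding k_def D'_def by auto
    ultimately show False using dH ij by fastforce
  qed
  have "dist_b b (p i) (p j) \<ge> D" if "i \<in> {1..M}" "j \<in> {1..M}" "i \<noteq> j" for i j
  proof -
    have d: "dist_H (p i) (p j) \<ge> D'" using dH that by blast
    have "dist_b b (p i) (p j) \<ge> min r (dist_H (p i) (p j) + b - 1)"
      by (rule dist_b_ge) (use len that d assms r_def D'_def in auto)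
    then show ?thesis using d rD assms unfolding D'_def by linarith
  qed
  then have "N_b TYPE('a) b M D \<le> r"
    unfolding N_b_def using len r_def by (intro Least_le) blast
  then show ?thesis unfolding r_def D'_def .
qed

end
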